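(* In the setting of the context, for each $s$ let $\sigma_{n,s}:\{1,\dots,n\}\to\{1,\dots,n\}$ be any permutation and define \[ Y^\ast_{ni}=\sum_{s=1}^{\mathcal{S}}\sum_{a\in\{0,1\}}Y_{\sigma_{n,s}(i)}(a,s)\mathbb{I}\{A_{ni}=a,\mathbb{S}(Z_i)=s\},\quad Z^\ast_{ni}=\sum_{s=1}^{\mathcal{S}}Z_{\sigma_{n,s}(i)}(s)\mathbb{I}\{\mathbb{S}(Z_i)=s\}, \] $X^\ast_{ni}=(Y^\ast_{ni},A_{ni},Z^\ast_{ni})$ and $\mathbf{X}^\ast_n=(X^\ast_{n1},\dots,X^\ast_{nn})'$. Then the joint distribution of $(\mathbf{X}^\ast_n,\mathbf{S}_n)$ equals that of $(\mathbf{X}_n,\mathbf{S}_n)$, and $\mathbf{X}_n$ and $\mathbf{X}^\ast_n$ are conditionally independent given $(\mathbf{A}_n,\mathbf{S}_n)$.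
   Context: Population: $W=(Y(0),Y(1),Z')'\in\mathbb{R}^{2+k}$; $\mathbf{Q}$ a family of distributions of $W$ each with a density w.r.t. a product of $\sigma$-finite measures $\mu_0\otimes\mu_1\otimes\mu_Z$ and $\mathbb{E}_Q[Y(a)^2]<\infty$; true $Q_0\in\mathbf{Q}$. Known measurable $\mathbb{S}:\mathbb{R}^k\to\{1,\dots,\mathcal{S}\}$, $\pi(s)\in(0,1)$. Sample $\mathbf{W}=\{W_i=(Y_i(0),Y_i(1),Z_i)\}_{i\in\mathbb{N}}$ i.i.d. $Q_0$; treatments $\mathbf{A}_n=(A_{n1},\dots,A_{nn})\in\{0,1\}^n$ for each $n$; $S_i=\mathbb{S}(Z_i)$, $\mathbf{S}_n=(S_1,\dots,S_n)$; observed $X_{ni}=(Y_{ni},A_{ni},Z_i)$ with $Y_{ni}=Y_i(1)A_{ni}+Y_i(0)(1-A_{ni})$, $\mathbf{X}_n=(X_{n1},\dots,X_{nn})'$; $(W_1,\dots,W_n)$ and $\mathbf{A}_n$ conditionally independent given $\mathbf{S}_n$; $\Pr(\mathbf{A}_n=\mathbf{a}\mid\mathbf{S}_n=\mathbf{s})$ known and not depending on $Q_0$; $N_n(1,s)/N_n(s)\to\pi(s)$ in probability. Coupling construction: $\mathbf{W}^\ast=\{W_i(s)=(Y_i(0,s),Y_i(1,s),Z_i(s)'):i\in\mathbb{N},s\in\{1,\dots,\mathcal{S}\}\}$ is a collection of random vectors on the same probability space, independent across $(i,s)$, with $W_i(s)$ distributed as $W$ conditional on $\mathbb{S}(Z)=s$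 under $Q_0$, and $\mathbf{W}^\ast$ independent of $\mathbf{W}$ and of all $\mathbf{A}_n$, $n\in\mathbb{N}$. *)

theory Defs
  imports "HOL-Probability.Probability"
begin

type_synonym 'k unit_rec = "real \<times> real \<times> (real ^ 'k)"
  (* a realisation of W = (Y(0), Y(1), Z) with Z in R^k *)

definition cond_indep_disc ::
  "'o measure \<Rightarrow> 'x measure \<Rightarrow> ('o \<Rightarrow> 'x) \<Rightarrow> 'y measure \<Rightarrow> ('o \<Rightarrow> 'y) \<Rightarrow> ('o \<Rightarrow> 'c) \<Rightarrow> bool" where
  "cond_indep_disc M MX X MY Y C \<longleftrightarrow>
     (\<forall>c. \<forall>B\<in>sets MX. \<forall>B'\<in>sets MY.
        measure M {\<omega>\<in>space M. X \<omega> \<in> B \<and> Y \<omega> \<in> B' \<and> C \<omega> = c} * measure M {\<omega>\<in>space M. C \<omega> = c}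
      = measure M {\<omega>\<in>space M. X \<omega> \<in> B \<and> C \<omega> = c} * measure M {\<omega>\<in>space M. Y \<omega> \<in> B' \<and> C \<omega> = c})"

definition Y0 :: "'k unit_rec \<Rightarrow> real" where "Y0 w = fst w"
definition Y1 :: "'k unit_rec \<Rightarrow> real" where "Y1 w = fst (snd w)"
definition Zc :: "'k unit_rec \<Rightarrow> real ^ 'k" where "Zc w = snd (snd w)"

text \<open>Measure on observations X = (Y, A, Z); the treatment A in {0,1} is encoded as bool
  (True = 1).\<close>
definition obs_measure :: "(real \<times> bool \<times> (real ^ 'k)) measure" where
  "obs_measure = borel \<Otimes>\<^sub>M (count_space UNIV \<Otimes>\<^sub>M borel)"

definition obs :: "'k unit_rec \<Rightarrow> bool \<Rightarrow> real \<times> bool \<times> (real ^ 'k)" where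
  "obs w a = (Y1 w * of_bool a + Y0 w * (1 - of_bool a), a, Zc w)"

text \<open>Coupled observation X*_{ni}, given the strata map, the number of strata SS,
  the permutations sig s, the coupling variables Wst j s (value at a fixed outcome),
  the treatment a = A_{ni} and the stratum-determining covariate z = Z_i.\<close>
definition obs_star ::
  "((real ^ 'k) \<Rightarrow> nat) \<Rightarrow> nat \<Rightarrow> (nat \<Rightarrow> nat \<Rightarrow> nat) \<Rightarrow> (nat \<Rightarrow> nat \<Rightarrow> 'k unit_rec)
     \<Rightarrow> nat \<Rightarrow> bool \<Rightarrow> real ^ 'k \<Rightarrow> real \<times> bool \<times> (real ^ 'k)" where
  "obs_star Sf SS sig Wst i a z =
     ((\<Sum>s\<in>{1..SS}. Y0 (Wst (sig s i) s) * of_bool (a = False \<and> Sf z = s)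
                   + Y1 (Wst (sig s i) s) * of_bool (a = True \<and> Sf z = s)),
      a,
      (\<Sum>s\<in>{1..SS}. of_bool (Sf z = s) *\<^sub>R Zc (Wst (sig s i) s)))"

end

theory Submission
  imports Defs
begin

lemma PiM_uniform:
  fixes Q :: "'a measure" and T :: "'i \<Rightarrow> 'a set"
  assumes I: "finite I" and Q: "prob_space Q"
    and T: "\<And>i. T i \<in> sets Q" and Tpos: "\<And>i. emeasure Q (T i) \<noteq> 0"
  shows "uniform_measure (PiM I (\<lambda>_. Q)) (PiE I T) = PiM I (\<lambda>i. uniform_measure Q (T i))"
proof -
  interpret Q: prob_space Q by fact
  have ps: "prob_space (uniform_measure Q (T i))" for i
    by (rule prob_space_uniform_measure) (use Tpos in auto)
  interpret U: product_sigma_finite "\<lambda>i. uniform_measure Q (T i)"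
    unfolding product_sigma_finite_def using ps prob_space_imp_sigma_finite by blast
  interpret P: product_prob_space "\<lambda>_. Q"
    by (simp add: Q.prob_space_axioms product_prob_space_def product_prob_space_axioms_def product_sigma_finite_def prob_space_imp_sigma_finite)
  interpret PQ: prob_space "PiM I (\<lambda>_. Q)" by (rule prob_space_PiM) (simp add: Q.prob_space_axioms)
  have PT: "PiE I T \<in> sets (PiM I (\<lambda>_. Q))" using I T by (auto intro!: sets_PiM_I_finite)
  have eT: "emeasure (PiM I (\<lambda>_. Q)) (PiE I T) = (\<Prod>i\<in>I. emeasure Q (T i))"
    using I T by (simp add: P.emeasure_PiM)
  show ?thesis
  proof (rule U.PiM_eqI[OF I])
    show "sets (uniform_measure (PiM I (\<lambda>_. Q)) (PiE I T)) = sets (PiM I (\<lambda>i. uniform_measure Q (T i)))"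
      by (simp only: sets_uniform_measure) (intro sets_PiM_cong; simp)
  next
    fix B assume B: "\<And>i. i \<in> I \<Longrightarrow> B i \<in> sets (uniform_measure Q (T i))"
    then have B': "\<And>i. i \<in> I \<Longrightarrow> B i \<in> sets Q" by simp
    have PB: "PiE I B \<in> sets (PiM I (\<lambda>_. Q))" using I B' by (auto intro!: sets_PiM_I_finite)
    have int: "PiE I T \<inter> PiE I B = PiE I (\<lambda>i. T i \<inter> B i)" by auto
    have "emeasure (uniform_measure (PiM I (\<lambda>_. Q)) (PiE I T)) (PiE I B)
        = emeasure (PiM I (\<lambda>_. Q)) (PiE I (\<lambda>i. T i \<inter> B i)) / emeasure (PiM I (\<lambda>_. Q)) (PiE I T)"
      using PT PB by (simp add: int)
    also have "\<dots> = (\<Prod>i\<in>I. emeasure Q (T i \<inter> B i)) / (\<Prod>i\<in>I. emeasure Q (T i))"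
      using I T B' by (simp add: P.emeasure_PiM eT)
    also have "\<dots> = (\<Prod>i\<in>I. emeasure Q (T i \<inter> B i) / emeasure Q (T i))"
    proof -
      have pos: "0 < measure Q (T i)" for i using Tpos Q.emeasure_eq_measure
        by (metis measure_nonneg ennreal_0 less_eq_real_def)
      have "(\<Prod>i\<in>I. emeasure Q (T i \<inter> B i)) / (\<Prod>i\<in>I. emeasure Q (T i))
          = ennreal (\<Prod>i\<in>I. measure Q (T i \<inter> B i)) / ennreal (\<Prod>i\<in>I. measure Q (T i))"
        by (simp add: Q.emeasure_eq_measure prod_ennreal)
      also have "\<dots> = ennreal ((\<Prod>i\<in>I. measure Q (T i \<inter> B i)) / (\<Prod>i\<in>I. measure Q (T i)))"
        using pos by (intro divide_ennreal) (auto intro!: prod_nonneg prod_pos)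
      also have "\<dots> = ennreal (\<Prod>i\<in>I. measure Q (T i \<inter> B i) / measure Q (T i))"
        by (simp add: prod_dividef)
      also have "\<dots> = (\<Prod>i\<in>I. ennreal (measure Q (T i \<inter> B i)) / ennreal (measure Q (T i)))"
        using pos by (subst prod_ennreal[symmetric]) (auto simp: divide_ennreal)
      finally show ?thesis by (simp add: Q.emeasure_eq_measure)
    qed
    also have "\<dots> = (\<Prod>i\<in>I. emeasure (uniform_measure Q (T i)) (B i))"
      using B' T by (intro prod.cong) auto
    finally show "emeasure (uniform_measure (PiM I (\<lambda>_. Q)) (PiE I T)) (PiE I B)
        = (\<Prod>i\<in>I. emeasure (uniform_measure Q (T i)) (B i))" .
  qed
qed

lemma (in prob_space) indep_sets_reindex':
  assumes ind: "indep_sets F (f ` I)" and inj: "inj_on f I"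
  shows "indep_sets (\<lambda>i. F (f i)) I"
  unfolding indep_sets_def
proof (intro conjI ballI allI impI)
  fix i assume "i \<in> I" then show "F (f i) \<subseteq> events" using ind unfolding indep_sets_def by auto
next
  fix J A assume J: "J \<subseteq> I" "J \<noteq> {}" "finite J" and A: "A \<in> Pi J (\<lambda>i. F (f i))"
  define A' where "A' y = A (the_inv_into J f y)" for y
  have injJ: "inj_on f J" using inj J by (auto intro: inj_on_subset)
  have A'f: "A' (f j) = A j" if "j \<in> J" for j
    using that injJ by (simp add: A'_def the_inv_into_f_f)
  have sub: "f ` J \<subseteq> f ` I" using J by auto
  have A'P: "A' \<in> Pi (f ` J) F" using A A'f by (auto simp: Pi_iff)
  have "prob (\<Inter>y\<in>f ` J. A' y) = (\<Prod>y\<in>f ` J. prob (A' y))"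
    using ind[unfolded indep_sets_def] sub J(2,3) A'P by blast
  moreover have "(\<Inter>y\<in>f ` J. A' y) = (\<Inter>j\<in>J. A j)" using A'f by auto
  moreover have "(\<Prod>y\<in>f ` J. prob (A' y)) = (\<Prod>j\<in>J. prob (A j))"
    using A'f by (simp add: prod.reindex[OF injJ])
  ultimately show "prob (\<Inter>j\<in>J. A j) = (\<Prod>j\<in>J. prob (A j))" by simp
qed

lemma (in prob_space) indep_vars_reindex':
  assumes ind: "indep_vars M' X (f ` I)" and inj: "inj_on f I"
  shows "indep_vars (\<lambda>i. M' (f i)) (\<lambda>i. X (f i)) I"
  using ind inj unfolding indep_vars_def2
  by (auto intro: indep_sets_reindex'[where F="\<lambda>j. {X j -` A \<inter> space M |A. A \<in> sets (M' j)}"])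

lemma (in prob_space) distr_PiM_indep:
  assumes ind: "indep_vars M' X I" and rv: "\<And>i. i \<in> I \<Longrightarrow> random_variable (M' i) (X i)"
  shows "distr M (PiM I M') (\<lambda>x. \<lambda>i\<in>I. X i x) = PiM I (\<lambda>i. distr M (M' i) (X i))"
proof (cases "I = {}")
  case True
  have m: "(\<lambda>x. \<lambda>i\<in>I. X i x) \<in> M \<rightarrow>\<^sub>M PiM I M'" using rv by measurable
  show ?thesis
  proof (rule measure_eqI)
    show "sets (distr M (PiM I M') (\<lambda>x. \<lambda>i\<in>I. X i x)) = sets (PiM I (\<lambda>i. distr M (M' i) (X i)))"
      using True by (simp add: sets_PiM_empty)
  next
    fix B assume B: "B \<in> sets (distr M (PiM I M') (\<lambda>x. \<lambda>i\<in>I. X i x))"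
    then have B': "B \<in> sets (PiM I M')" by simp
    have sub: "B \<subseteq> {\<lambda>_. undefined}" using B' True sets.sets_into_space[OF B'] by (simp add: space_PiM)
    show "emeasure (distr M (PiM I M') (\<lambda>x. \<lambda>i\<in>I. X i x)) B = emeasure (PiM I (\<lambda>i. distr M (M' i) (X i))) B"
    proof (cases "B = {}")
      case True then show ?thesis by simp
    next
      case False
      then have Bu: "B = {\<lambda>_. undefined}" using sub by blast
      have "(\<lambda>x. \<lambda>i\<in>I. X i x) -` B \<inter> space M = space M" using Bu \<open>I = {}\<close> by auto
      then show ?thesis using B' m Bu \<open>I = {}\<close> by (simp add: emeasure_distr PiM_empty emeasure_space_1)
    qed
  qed
next
  case False
  show ?thesis using indep_vars_iff_distr_eq_PiM'[OF False rv] ind by simp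
qed

lemma sum_of_bool_single:
  fixes f :: "nat \<Rightarrow> 'a::real_vector"
  assumes "s \<in> S" "finite S"
  shows "(\<Sum>t\<in>S. of_bool (s = t) *\<^sub>R f t) = f s"
proof -
  have "(\<Sum>t\<in>S. of_bool (s = t) *\<^sub>R f t) = (\<Sum>t\<in>S. if t = s then f s else 0)"
    by (intro sum.cong) auto
  then show ?thesis using assms by simp
qed

lemma obs_star_eq:
  assumes "Sf z \<in> {1..SS}"
  shows "obs_star Sf SS sig Wst' i a z = obs (Wst' (sig (Sf z) i) (Sf z)) a"
proof -
  have 1: "(\<Sum>s\<in>{1..SS}. Y0 (Wst' (sig s i) s) * of_bool (a = False \<and> Sf z = s)
                   + Y1 (Wst' (sig s i) s) * of_bool (a = True \<and> Sf z = s))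
     = (\<Sum>s\<in>{1..SS}. if s = Sf z then Y1 (Wst' (sig (Sf z) i) (Sf z)) * of_bool a + Y0 (Wst' (sig (Sf z) i) (Sf z)) * (1 - of_bool a) else 0)"
    by (intro sum.cong) auto
  have 2: "(\<Sum>s\<in>{1..SS}. of_bool (Sf z = s) *\<^sub>R Zc (Wst' (sig s i) s)) = Zc (Wst' (sig (Sf z) i) (Sf z))"
    using sum_of_bool_single[OF assms, of "\<lambda>s. Zc (Wst' (sig s i) s)"] by simp
  show ?thesis using assms unfolding obs_star_def obs_def 1 2 by simp
qed

lemma Y0_meas[measurable]: "(Y0 :: 'k::finite unit_rec \<Rightarrow> real) \<in> borel_measurable borel"
  unfolding Y0_def by (intro borel_measurable_continuous_onI continuous_intros)
lemma Y1_meas[measurable]: "(Y1 :: 'k::finite unit_rec \<Rightarrow> real) \<in> borel_measurable borel"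
  unfolding Y1_def by (intro borel_measurable_continuous_onI continuous_intros)
lemma Zc_meas[measurable]: "(Zc :: 'k::finite unit_rec \<Rightarrow> real ^ 'k) \<in> borel_measurable borel"
  unfolding Zc_def by (intro borel_measurable_continuous_onI continuous_intros)

lemma obs_meas:
  "(\<lambda>w. obs (w :: 'k::finite unit_rec) (a w)) \<in> borel \<rightarrow>\<^sub>M obs_measure"
  if [measurable]: "a \<in> borel \<rightarrow>\<^sub>M count_space UNIV"
  unfolding obs_def obs_measure_def by measurable

lemma obs_meas_gen[measurable]:
  assumes [measurable]: "f \<in> N \<rightarrow>\<^sub>M (borel :: 'k::finite unit_rec measure)" "a \<in> N \<rightarrow>\<^sub>M count_space UNIV"
  shows "(\<lambda>x. obs (f x) (a x)) \<in> N \<rightarrow>\<^sub>M obs_measure"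
  unfolding obs_def obs_measure_def by measurable

lemma obs_star_meas[measurable]:
  fixes Wst' :: "'o \<Rightarrow> nat \<Rightarrow> nat \<Rightarrow> 'k::finite unit_rec"
  assumes [measurable]: "\<And>j s. (\<lambda>x. Wst' x j s) \<in> N \<rightarrow>\<^sub>M borel" "a \<in> N \<rightarrow>\<^sub>M count_space UNIV"
    "z \<in> N \<rightarrow>\<^sub>M borel" "Sf \<in> borel \<rightarrow>\<^sub>M count_space UNIV"
  shows "(\<lambda>x. obs_star Sf SS sig (Wst' x) i (a x) (z x)) \<in> N \<rightarrow>\<^sub>M obs_measure"
  unfolding obs_star_def obs_measure_def by measurable

lemma singleton_PiM_count:
  assumes "finite I" "a \<in> extensional I"
  shows "{a} \<in> sets (PiM I (\<lambda>_. count_space UNIV))"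
proof -
  have "{a} = PiE I (\<lambda>i. {a i})" using assms(2) by (auto simp: PiE_iff extensional_def fun_eq_iff) metis
  then show ?thesis using assms(1) by (auto intro!: sets_PiM_I_finite)
qed

lemma ev_meas:
  assumes "f \<in> M \<rightarrow>\<^sub>M N1" "g \<in> M \<rightarrow>\<^sub>M N2" "E \<in> sets N1" "{b} \<in> sets N2"
  shows "{\<omega>\<in>space M. f \<omega> \<in> E \<and> g \<omega> = b} \<in> sets M"
proof -
  have "{\<omega>\<in>space M. f \<omega> \<in> E \<and> g \<omega> = b} = (\<lambda>\<omega>. (f \<omega>, g \<omega>)) -` (E \<times> {b}) \<inter> space M" by auto
  also have "\<dots> \<in> sets M" using assms by (intro measurable_sets[where A="N1 \<Otimes>\<^sub>M N2"]) auto
  finally show ?thesis .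
qed

lemma vimage_ev:
  assumes "h \<in> D \<rightarrow>\<^sub>M N" "K \<in> sets N" "\<And>\<omega>. \<omega> \<in> X \<Longrightarrow> f \<omega> \<in> space D"
  shows "{\<omega>\<in>X. h (f \<omega>) \<in> K} \<in> sets (vimage_algebra X f D)"
proof -
  have "{\<omega>\<in>X. h (f \<omega>) \<in> K} = f -` (h -` K \<inter> space D) \<inter> X" using assms(3) by auto
  moreover have "h -` K \<inter> space D \<in> sets D" using assms(1,2) by (rule measurable_sets)
  ultimately show ?thesis unfolding sets_vimage_algebra
    by (metis (mono_tags, lifting) CollectI sigma_sets.Basic)
qed

theorem lemma7:
  fixes M :: "'o measure"
    and Q0 :: "'k::finite unit_rec measure"
    and Sf :: "real ^ 'k \<Rightarrow> nat" and SS :: nat and \<pi> :: "nat \<Rightarrow> real"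
    and W :: "nat \<Rightarrow> 'o \<Rightarrow> 'k unit_rec"
    and A :: "nat \<Rightarrow> nat \<Rightarrow> 'o \<Rightarrow> bool"
    and Wst :: "nat \<Rightarrow> nat \<Rightarrow> 'o \<Rightarrow> 'k unit_rec"
    and n :: nat and sig :: "nat \<Rightarrow> nat \<Rightarrow> nat"
  assumes M: "prob_space M"
    (* Q0: density w.r.t. a product of sigma-finite measures, finite second moments *)
    and Q0_density: "\<exists>(\<mu>0::real measure) (\<mu>1::real measure) (\<mu>Z::(real ^ 'k) measure) f.
        sigma_finite_measure \<mu>0 \<and> sigma_finite_measure \<mu>1 \<and> sigma_finite_measure \<mu>Z \<and>
        sets \<mu>0 = sets borel \<and> sets \<mu>1 = sets borel \<and> sets \<mu>Z = sets borel \<and>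
        f \<in> borel_measurable (\<mu>0 \<Otimes>\<^sub>M (\<mu>1 \<Otimes>\<^sub>M \<mu>Z)) \<and>
        Q0 = density (\<mu>0 \<Otimes>\<^sub>M (\<mu>1 \<Otimes>\<^sub>M \<mu>Z)) f"
    and Q0_mom0: "integrable Q0 (\<lambda>w. (Y0 w)\<^sup>2)"
    and Q0_mom1: "integrable Q0 (\<lambda>w. (Y1 w)\<^sup>2)"
    (* strata *)
    and Sf_meas: "Sf \<in> borel \<rightarrow>\<^sub>M count_space UNIV"
    and Sf_range: "\<And>z. Sf z \<in> {1..SS}"
    and \<pi>_range: "\<And>s. s \<in> {1..SS} \<Longrightarrow> 0 < \<pi> s \<and> \<pi> s < 1"
    (* i.i.d. sample from Q0 *)
    and W_rv: "\<And>i. W i \<in> M \<rightarrow>\<^sub>M borel"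
    and W_indep: "prob_space.indep_vars M (\<lambda>_. borel) W UNIV"
    and W_distr: "\<And>i. distr M borel (W i) = Q0"
    (* treatments *)
    and A_rv: "\<And>m i. A m i \<in> M \<rightarrow>\<^sub>M count_space UNIV"
    and A_cond_indep: "\<And>m. cond_indep_disc M
        (Pi\<^sub>M {1..m} (\<lambda>_. borel)) (\<lambda>\<omega>. \<lambda>i\<in>{1..m}. W i \<omega>)
        (Pi\<^sub>M {1..m} (\<lambda>_. count_space UNIV)) (\<lambda>\<omega>. \<lambda>i\<in>{1..m}. A m i \<omega>)
        (\<lambda>\<omega>. \<lambda>i\<in>{1..m}. Sf (Zc (W i \<omega>)))"
    and N_conv: "\<And>s \<epsilon>. s \<in> {1..SS} \<Longrightarrow> \<epsilon> > 0 \<Longrightarrow>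
        (\<lambda>m. measure M {\<omega>\<in>space M.
            \<bar>real (card {i\<in>{1..m}. A m i \<omega> \<and> Sf (Zc (W i \<omega>)) = s})
              / real (card {i\<in>{1..m}. Sf (Zc (W i \<omega>)) = s}) - \<pi> s\<bar> > \<epsilon>})
        \<longlonglongrightarrow> 0"
    (* coupling construction *)
    and Wst_rv: "\<And>i s. Wst i s \<in> M \<rightarrow>\<^sub>M borel"
    and Wst_indep: "prob_space.indep_vars M (\<lambda>_. borel) (\<lambda>(i, s). Wst i s) (UNIV \<times> {1..SS})"
    and Wst_distr: "\<And>i s B. s \<in> {1..SS} \<Longrightarrow> B \<in> sets borel \<Longrightarrow>
        measure M {\<omega>\<in>space M. Wst i s \<omega> \<in> B}
          = measure Q0 {w\<in>space Q0. w \<in> B \<and> Sf (Zc w) = s} / measure Q0 {w\<in>space Q0. Sf (Zc w) = s}"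
    and Q0_strata_pos: "\<And>s. s \<in> {1..SS} \<Longrightarrow> measure Q0 {w\<in>space Q0. Sf (Zc w) = s} > 0"
    and Wst_indep_rest: "prob_space.indep_set M
        (sets (vimage_algebra (space M) (\<lambda>\<omega>. \<lambda>p\<in>UNIV \<times> {1..SS}. Wst (fst p) (snd p) \<omega>)
                 (Pi\<^sub>M (UNIV \<times> {1..SS}) (\<lambda>_. borel))))
        (sets (vimage_algebra (space M) (\<lambda>\<omega>. (\<lambda>i. W i \<omega>, \<lambda>m i. A m i \<omega>))
                 (Pi\<^sub>M UNIV (\<lambda>_. borel) \<Otimes>\<^sub>M Pi\<^sub>M UNIV (\<lambda>_. Pi\<^sub>M UNIV (\<lambda>_. count_space UNIV)))))"
    (* permutations *)
    and sig_perm: "\<And>s. s \<in> {1..SS} \<Longrightarrow> sig s permutes {1..n}"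
  shows "distr M (Pi\<^sub>M {1..n} (\<lambda>_. obs_measure) \<Otimes>\<^sub>M Pi\<^sub>M {1..n} (\<lambda>_. count_space UNIV))
            (\<lambda>\<omega>. (\<lambda>i\<in>{1..n}. obs_star Sf SS sig (\<lambda>j s. Wst j s \<omega>) i (A n i \<omega>) (Zc (W i \<omega>)),
                   \<lambda>i\<in>{1..n}. Sf (Zc (W i \<omega>))))
       = distr M (Pi\<^sub>M {1..n} (\<lambda>_. obs_measure) \<Otimes>\<^sub>M Pi\<^sub>M {1..n} (\<lambda>_. count_space UNIV))
            (\<lambda>\<omega>. (\<lambda>i\<in>{1..n}. obs (W i \<omega>) (A n i \<omega>),
                   \<lambda>i\<in>{1..n}. Sf (Zc (W i \<omega>))))
     \<and> cond_indep_disc M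
         (Pi\<^sub>M {1..n} (\<lambda>_. obs_measure)) (\<lambda>\<omega>. \<lambda>i\<in>{1..n}. obs (W i \<omega>) (A n i \<omega>))
         (Pi\<^sub>M {1..n} (\<lambda>_. obs_measure))
           (\<lambda>\<omega>. \<lambda>i\<in>{1..n}. obs_star Sf SS sig (\<lambda>j s. Wst j s \<omega>) i (A n i \<omega>) (Zc (W i \<omega>)))
         (\<lambda>\<omega>. (\<lambda>i\<in>{1..n}. A n i \<omega>, \<lambda>i\<in>{1..n}. Sf (Zc (W i \<omega>))))"
proof -
  interpret prob_space M by (rule M)
  define I where "I = {1..n::nat}"
  have finI: "finite I" by (simp add: I_def)
  have sQ: "sets Q0 = sets borel" using W_distr[of 0] by (metis sets_distr)
  have spQ: "space Q0 = UNIV" using sets_eq_imp_space_eq[OF sQ] by simp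
  have Qp: "prob_space Q0" using W_distr[of 0] prob_space_distr W_rv by metis
  interpret Q: prob_space Q0 by (rule Qp)
  define str where "str s = {w::'k unit_rec. Sf (Zc w) = s}" for s
  have SfZc: "(\<lambda>w::'k unit_rec. Sf (Zc w)) \<in> borel \<rightarrow>\<^sub>M count_space UNIV" using Sf_meas by measurable
  have str_sets: "str s \<in> sets Q0" for s
  proof -
    have "(\<lambda>w::'k unit_rec. Sf (Zc w)) -` {s} \<inter> space borel \<in> sets borel"
      by (rule measurable_sets[OF SfZc]) simp
    then show ?thesis by (simp add: sQ str_def vimage_def)
  qed
  have str_eq: "{w\<in>space Q0. Sf (Zc w) = s} = str s" for s by (simp add: spQ str_def)
  have str_pos: "0 < measure Q0 (str s)" if "s \<in> {1..SS}" for s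
    using Q0_strata_pos[OF that] by (simp add: str_eq)
  have str_epos: "emeasure Q0 (str s) \<noteq> 0" if "s \<in> {1..SS}" for s
    using str_pos[OF that] Q.emeasure_eq_measure by auto
  have SS1: "1 \<in> {1..SS}" using Sf_range[of 0] by auto
  have dWst: "distr M borel (Wst j s) = uniform_measure Q0 (str s)" if s: "s \<in> {1..SS}" for j s
  proof (rule measure_eqI)
    show "sets (distr M borel (Wst j s)) = sets (uniform_measure Q0 (str s))" by (simp add: sQ)
  next
    fix B assume "B \<in> sets (distr M borel (Wst j s))"
    then have B: "B \<in> sets borel" by simp
    have "emeasure (distr M borel (Wst j s)) B = emeasure M (Wst j s -` B \<inter> space M)"
      using B Wst_rv by (simp add: emeasure_distr)
    also have "\<dots> = ennreal (measure M {\<omega>\<in>space M. Wst j s \<omega> \<in> B})"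
      by (simp add: emeasure_eq_measure vimage_def Int_def conj_commute)
    also have "\<dots> = ennreal (measure Q0 (B \<inter> str s) / measure Q0 (str s))"
      using Wst_distr[OF s B] by (simp add: str_def spQ Int_def)
    also have "\<dots> = emeasure Q0 (str s \<inter> B) / emeasure Q0 (str s)"
      using str_pos[OF s] by (simp add: Q.emeasure_eq_measure divide_ennreal Int_commute)
    also have "\<dots> = emeasure (uniform_measure Q0 (str s)) B"
      using B str_sets by (simp add: sQ)
    finally show "emeasure (distr M borel (Wst j s)) B = emeasure (uniform_measure Q0 (str s)) B" .
  qed
  define V where "V \<omega> = (\<lambda>i\<in>I. W i \<omega>)" for \<omega>
  define Av where "Av \<omega> = (\<lambda>i\<in>I. A n i \<omega>)" for \<omega>
  define Sv where "Sv \<omega> = (\<lambda>i\<in>I. Sf (Zc (W i \<omega>)))" for \<omega>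
  define U where "U c \<omega> = (\<lambda>i\<in>I. Wst (sig (c i) i) (c i) \<omega>)" for c \<omega>
  define Phi where "Phi a u = (\<lambda>i\<in>I. obs (u i) (a i))" for a :: "nat \<Rightarrow> bool" and u :: "nat \<Rightarrow> 'k unit_rec"
  define X where "X \<omega> = (\<lambda>i\<in>I. obs (W i \<omega>) (A n i \<omega>))" for \<omega>
  define Xs where "Xs \<omega> = (\<lambda>i\<in>I. obs_star Sf SS sig (\<lambda>j s. Wst j s \<omega>) i (A n i \<omega>) (Zc (W i \<omega>)))" for \<omega>
  define CS where "CS = PiE I (\<lambda>_. {1..SS})"
  have Sv_CS: "Sv \<omega> \<in> CS" for \<omega> using Sf_range by (auto simp: Sv_def CS_def)
  have Xs_eq: "Xs \<omega> = Phi (Av \<omega>) (U (Sv \<omega>) \<omega>)" for \<omega>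
    unfolding Xs_def Phi_def Av_def U_def Sv_def
    by (intro restrict_ext) (simp add: obs_star_eq[OF Sf_range])
  have X_eq: "X \<omega> = Phi (Av \<omega>) (V \<omega>)" for \<omega>
    unfolding X_def Phi_def Av_def V_def by (intro restrict_ext) simp
  note [measurable] = W_rv A_rv Wst_rv Sf_meas
  have V_meas[measurable]: "V \<in> M \<rightarrow>\<^sub>M PiM I (\<lambda>_. borel)" unfolding V_def by measurable
  have Av_meas[measurable]: "Av \<in> M \<rightarrow>\<^sub>M PiM I (\<lambda>_. count_space UNIV)" unfolding Av_def by measurable
  have Sv_meas[measurable]: "Sv \<in> M \<rightarrow>\<^sub>M PiM I (\<lambda>_. count_space UNIV)" unfolding Sv_def by measurable
  have U_meas[measurable]: "U c \<in> M \<rightarrow>\<^sub>M PiM I (\<lambda>_. borel)" for c unfolding U_def by measurable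
  have Phi_meas[measurable]: "Phi a \<in> PiM I (\<lambda>_. borel) \<rightarrow>\<^sub>M PiM I (\<lambda>_. obs_measure)" for a
    unfolding Phi_def by measurable
  have X_meas[measurable]: "X \<in> M \<rightarrow>\<^sub>M PiM I (\<lambda>_. obs_measure)" unfolding X_def by measurable
  have Xs_meas[measurable]: "Xs \<in> M \<rightarrow>\<^sub>M PiM I (\<lambda>_. obs_measure)" unfolding Xs_def by measurable
  have dV: "distr M (PiM I (\<lambda>_. borel)) V = PiM I (\<lambda>_. Q0)"
  proof -
    have "indep_vars (\<lambda>_. borel) W I" using indep_vars_subset[OF W_indep] by simp
    then have "distr M (PiM I (\<lambda>_. borel)) V = PiM I (\<lambda>i. distr M borel (W i))"
      unfolding V_def by (rule distr_PiM_indep) (simp add: W_rv)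
    then show ?thesis using W_distr by simp
  qed
  have dU: "distr M (PiM I (\<lambda>_. borel)) (U c) = PiM I (\<lambda>i. uniform_measure Q0 (str (c i)))"
    if c: "c \<in> CS" for c
  proof -
    define \<iota> where "\<iota> i = (sig (c i) i, c i)" for i
    have sub: "\<iota> ` I \<subseteq> UNIV \<times> {1..SS}" using c by (auto simp: \<iota>_def CS_def)
    have inj: "inj_on \<iota> I"
    proof (rule inj_onI)
      fix i j assume ij: "i \<in> I" "j \<in> I" "\<iota> i = \<iota> j"
      then have "c i = c j" "sig (c i) i = sig (c i) j" by (auto simp: \<iota>_def)
      moreover have "c i \<in> {1..SS}" using c ij by (auto simp: CS_def)
      ultimately show "i = j" using permutes_inj[OF sig_perm] by (metis injD)
    qed
    have "indep_vars (\<lambda>_. borel) (\<lambda>(i, s). Wst i s) (\<iota> ` I)"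
      by (rule indep_vars_subset[OF Wst_indep sub])
    from indep_vars_reindex'[OF this inj]
    have "indep_vars (\<lambda>_. borel) (\<lambda>i. Wst (sig (c i) i) (c i)) I"
      by (simp add: \<iota>_def)
    then have "distr M (PiM I (\<lambda>_. borel)) (U c) = PiM I (\<lambda>i. distr M borel (Wst (sig (c i) i) (c i)))"
      unfolding U_def by (rule distr_PiM_indep) (simp add: Wst_rv)
    also have "\<dots> = PiM I (\<lambda>i. uniform_measure Q0 (str (c i)))"
      using c by (intro PiM_cong refl dWst) (auto simp: CS_def)
    finally show ?thesis .
  qed
  have key: "prob {\<omega>\<in>space M. V \<omega> \<in> F \<inter> PiE I (\<lambda>i. str (c i))}
      = prob {\<omega>\<in>space M. U c \<omega> \<in> F} * prob {\<omega>\<in>space M. Sv \<omega> = c}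
     \<and> 0 < prob {\<omega>\<in>space M. Sv \<omega> = c}"
    if c: "c \<in> CS" and F: "F \<in> sets (PiM I (\<lambda>_. borel))" for c F
  proof -
    define T where "T i = (if i \<in> I then str (c i) else str 1)" for i
    have cI: "i \<in> I \<Longrightarrow> c i \<in> {1..SS}" for i using c by (auto simp: CS_def)
    have T_sets: "T i \<in> sets Q0" for i by (simp add: T_def str_sets)
    have T_pos: "emeasure Q0 (T i) \<noteq> 0" for i using str_epos cI SS1 by (simp add: T_def)
    have PT: "PiE I T = PiE I (\<lambda>i. str (c i))" by (auto simp: T_def PiE_iff)
    interpret PQ: product_prob_space "\<lambda>_. Q0"
      by (simp add: Q.prob_space_axioms product_prob_space_def product_prob_space_axioms_def product_sigma_finite_def prob_space_imp_sigma_finite)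
    interpret PQI: prob_space "PiM I (\<lambda>_. Q0)" by (rule prob_space_PiM) (simp add: Q.prob_space_axioms)
    have sPQ: "sets (PiM I (\<lambda>_. Q0)) = sets (PiM I (\<lambda>_. borel))" by (intro sets_PiM_cong) (simp_all add: sQ)
    have F': "F \<in> sets (PiM I (\<lambda>_. Q0))" using F sPQ by simp
    have PT_sets: "PiE I T \<in> sets (PiM I (\<lambda>_. Q0))" using finI T_sets by (auto intro!: sets_PiM_I_finite)
    have ePT: "emeasure (PiM I (\<lambda>_. Q0)) (PiE I T) = (\<Prod>i\<in>I. emeasure Q0 (T i))"
      using finI T_sets by (simp add: PQ.emeasure_PiM)
    have ePT0: "emeasure (PiM I (\<lambda>_. Q0)) (PiE I T) \<noteq> 0"
    proof -
      have "(\<Prod>i\<in>I. emeasure Q0 (T i)) = ennreal (\<Prod>i\<in>I. measure Q0 (T i))"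
        by (simp add: Q.emeasure_eq_measure prod_ennreal)
      moreover have "0 < (\<Prod>i\<in>I. measure Q0 (T i))"
        using str_pos cI SS1 by (intro prod_pos) (simp add: T_def)
      ultimately show ?thesis using ePT by simp
    qed
    have mPT: "0 < measure (PiM I (\<lambda>_. Q0)) (PiE I T)"
      using ePT0 PQI.emeasure_eq_measure by (simp add: zero_less_measure_iff)
    have unif: "uniform_measure (PiM I (\<lambda>_. Q0)) (PiE I T) = PiM I (\<lambda>i. uniform_measure Q0 (str (c i)))"
    proof -
      have "uniform_measure (PiM I (\<lambda>_. Q0)) (PiE I T) = PiM I (\<lambda>i. uniform_measure Q0 (T i))"
        by (rule PiM_uniform[OF finI Qp T_sets T_pos])
      also have "\<dots> = PiM I (\<lambda>i. uniform_measure Q0 (str (c i)))"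
        by (rule PiM_cong) (simp_all add: T_def)
      finally show ?thesis .
    qed
    have "measure (PiM I (\<lambda>i. uniform_measure Q0 (str (c i)))) F
        = measure (PiM I (\<lambda>_. Q0)) (PiE I T \<inter> F) / measure (PiM I (\<lambda>_. Q0)) (PiE I T)"
      unfolding unif[symmetric] using ePT0 F' by (simp add: measure_uniform_measure)
    moreover have "measure (PiM I (\<lambda>i. uniform_measure Q0 (str (c i)))) F = prob {\<omega>\<in>space M. U c \<omega> \<in> F}"
    proof -
      have "measure (distr M (PiM I (\<lambda>_. borel)) (U c)) F = measure M (U c -` F \<inter> space M)"
        by (rule measure_distr[OF U_meas F])
      moreover have "U c -` F \<inter> space M = {\<omega>\<in>space M. U c \<omega> \<in> F}" by auto
      ultimately show ?thesis using dU[OF c] by simp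
    qed
    moreover have "measure (PiM I (\<lambda>_. Q0)) G = prob {\<omega>\<in>space M. V \<omega> \<in> G}" if G: "G \<in> sets (PiM I (\<lambda>_. borel))" for G
    proof -
      have "measure (distr M (PiM I (\<lambda>_. borel)) V) G = measure M (V -` G \<inter> space M)"
        by (rule measure_distr[OF V_meas G])
      moreover have "V -` G \<inter> space M = {\<omega>\<in>space M. V \<omega> \<in> G}" by auto
      ultimately show ?thesis using dV by simp
    qed
    moreover have "{\<omega>\<in>space M. Sv \<omega> = c} = {\<omega>\<in>space M. V \<omega> \<in> PiE I T}"
    proof -
      have "Sv \<omega> = c \<longleftrightarrow> V \<omega> \<in> PiE I T" for \<omega>
      proof
        assume "Sv \<omega> = c" then show "V \<omega> \<in> PiE I T"
          by (auto simp: Sv_def V_def T_def str_def)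
      next
        assume "V \<omega> \<in> PiE I T"
        then have "\<forall>i\<in>I. Sf (Zc (W i \<omega>)) = c i" by (auto simp: V_def T_def str_def PiE_iff)
        then show "Sv \<omega> = c" using c unfolding Sv_def CS_def
          by (intro ext) (auto simp: PiE_iff extensional_def)
      qed
      then show ?thesis by auto
    qed
    moreover have "PiE I T \<inter> F = F \<inter> PiE I (\<lambda>i. str (c i))" using PT by auto
    moreover have "PiE I T \<in> sets (PiM I (\<lambda>_. borel))" using PT_sets sPQ by simp
    moreover have "F \<inter> PiE I (\<lambda>i. str (c i)) \<in> sets (PiM I (\<lambda>_. borel))" using PT_sets sPQ F PT by auto
    ultimately show ?thesis using mPT by (auto simp: field_simps)
  qed
  define Psi where "Psi \<omega> = (\<lambda>p\<in>UNIV \<times> {1..SS}. Wst (fst p) (snd p) \<omega>)" for \<omega>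
  define D1 where "D1 = (Pi\<^sub>M (UNIV \<times> {1..SS}) (\<lambda>_. borel) :: (nat \<times> nat \<Rightarrow> 'k unit_rec) measure)"
  define Theta where "Theta \<omega> = (\<lambda>i. W i \<omega>, \<lambda>m i. A m i \<omega>)" for \<omega>
  define D2 where "D2 = (Pi\<^sub>M UNIV (\<lambda>_. borel) \<Otimes>\<^sub>M Pi\<^sub>M UNIV (\<lambda>_. Pi\<^sub>M UNIV (\<lambda>_. count_space UNIV)) :: ((nat \<Rightarrow> 'k unit_rec) \<times> (nat \<Rightarrow> nat \<Rightarrow> bool)) measure)"
  define S1 where "S1 = sets (vimage_algebra (space M) Psi D1)"
  define S2 where "S2 = sets (vimage_algebra (space M) Theta D2)"
  have ind: "indep_set S1 S2" using Wst_indep_rest unfolding S1_def S2_def Psi_def D1_def Theta_def D2_def .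
  have ev1: "{\<omega>\<in>space M. U c \<omega> \<in> F} \<in> S1" if c: "c \<in> CS" and F: "F \<in> sets (PiM I (\<lambda>_. borel))" for c F
  proof -
    define R where "R g = (\<lambda>i\<in>I. g (sig (c i) i, c i))" for g :: "nat \<times> nat \<Rightarrow> 'k unit_rec"
    have Rm: "R \<in> D1 \<rightarrow>\<^sub>M PiM I (\<lambda>_. borel)" unfolding R_def D1_def
      by (rule measurable_restrict) (rule measurable_component_singleton, use c in \<open>auto simp: CS_def\<close>)
    have "{\<omega>\<in>space M. R (Psi \<omega>) \<in> F} \<in> S1" unfolding S1_def
      by (rule vimage_ev[OF Rm F]) (simp add: Psi_def D1_def space_PiM)
    moreover have "R (Psi \<omega>) = U c \<omega>" for \<omega>
      using c unfolding R_def Psi_def U_def CS_def by (intro restrict_ext) auto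
    ultimately show ?thesis by simp
  qed
  define h2 where "h2 x = ((\<lambda>i\<in>I. obs (fst x i) (snd x n i)), ((\<lambda>i\<in>I. snd x n i), (\<lambda>i\<in>I. Sf (Zc (fst x i)))))"
    for x :: "(nat \<Rightarrow> 'k unit_rec) \<times> (nat \<Rightarrow> nat \<Rightarrow> bool)"
  have h2m: "h2 \<in> D2 \<rightarrow>\<^sub>M (PiM I (\<lambda>_. obs_measure) \<Otimes>\<^sub>M (PiM I (\<lambda>_. count_space UNIV) \<Otimes>\<^sub>M PiM I (\<lambda>_. count_space UNIV)))"
  proof -
    have sn: "(\<lambda>x. snd x n) \<in> D2 \<rightarrow>\<^sub>M PiM UNIV (\<lambda>_. count_space UNIV)" unfolding D2_def
      by (rule measurable_compose[OF measurable_snd measurable_component_singleton]) simp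
    have [measurable]: "(\<lambda>x. snd x n i) \<in> D2 \<rightarrow>\<^sub>M count_space UNIV" for i
      by (rule measurable_compose[OF sn measurable_component_singleton]) simp
    have [measurable]: "(\<lambda>x. fst x i) \<in> D2 \<rightarrow>\<^sub>M borel" for i unfolding D2_def
      by (rule measurable_compose[OF measurable_fst measurable_component_singleton]) simp
    show ?thesis unfolding h2_def by measurable
  qed
  have spD2: "space D2 = UNIV" unfolding D2_def space_pair_measure space_PiM by auto
  have ev2: "{\<omega>\<in>space M. X \<omega> \<in> B \<and> Av \<omega> = a \<and> Sv \<omega> = c} \<in> S2"
    if B: "B \<in> sets (PiM I (\<lambda>_. obs_measure))" and a: "a \<in> extensional I" and c: "c \<in> extensional I" for B a c
  proof -
    have "B \<times> ({a} \<times> {c}) \<in> sets (PiM I (\<lambda>_. obs_measure) \<Otimes>\<^sub>M (PiM I (\<lambda>_. count_space UNIV) \<Otimes>\<^sub>M PiM I (\<lambda>_. count_space UNIV)))"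
      using B singleton_PiM_count[OF finI a] singleton_PiM_count[OF finI c] by (intro pair_measureI)
    then have "{\<omega>\<in>space M. h2 (Theta \<omega>) \<in> B \<times> ({a} \<times> {c})} \<in> S2" unfolding S2_def
      by (intro vimage_ev[OF h2m]) (simp_all add: spD2)
    moreover have "h2 (Theta \<omega>) = (X \<omega>, Av \<omega>, Sv \<omega>)" for \<omega>
      by (simp add: h2_def Theta_def X_def Av_def Sv_def)
    ultimately show ?thesis by simp
  qed
  have Xsp: "X \<omega> \<in> space (PiM I (\<lambda>_. obs_measure))" if "\<omega> \<in> space M" for \<omega>
    using measurable_space[OF X_meas that] .
  have Usp: "U c \<omega> \<in> space (PiM I (\<lambda>_. borel))" if "\<omega> \<in> space M" for c \<omega>
    using measurable_space[OF U_meas that] .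
  have Vsp: "V \<omega> \<in> space (PiM I (\<lambda>_. borel))" if "\<omega> \<in> space M" for \<omega>
    using measurable_space[OF V_meas that] .
  have Av_ext: "Av \<omega> \<in> extensional I" for \<omega> by (simp add: Av_def)
  have CS_ext: "c \<in> CS \<Longrightarrow> c \<in> extensional I" for c by (simp add: CS_def PiE_def)
  have C2: "cond_indep_disc M (PiM I (\<lambda>_. obs_measure)) X (PiM I (\<lambda>_. obs_measure)) Xs (\<lambda>\<omega>. (Av \<omega>, Sv \<omega>))"
    unfolding cond_indep_disc_def
  proof (intro allI ballI)
    fix c' :: "(nat \<Rightarrow> bool) \<times> (nat \<Rightarrow> nat)" and B B' :: "(nat \<Rightarrow> real \<times> bool \<times> (real ^ 'k)) set" assume B: "B \<in> sets (PiM I (\<lambda>_. obs_measure))" and B': "B' \<in> sets (PiM I (\<lambda>_. obs_measure))"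
    obtain a c where c': "c' = (a, c)" by (cases c')
    show "measure M {\<omega>\<in>space M. X \<omega> \<in> B \<and> Xs \<omega> \<in> B' \<and> (Av \<omega>, Sv \<omega>) = c'} * measure M {\<omega>\<in>space M. (Av \<omega>, Sv \<omega>) = c'}
      = measure M {\<omega>\<in>space M. X \<omega> \<in> B \<and> (Av \<omega>, Sv \<omega>) = c'} * measure M {\<omega>\<in>space M. Xs \<omega> \<in> B' \<and> (Av \<omega>, Sv \<omega>) = c'}"
    proof (cases "\<exists>\<omega>\<in>space M. Av \<omega> = a \<and> Sv \<omega> = c")
      case False
      then have z: "{\<omega>\<in>space M. (Av \<omega>, Sv \<omega>) = c'} = {}" "{\<omega>\<in>space M. X \<omega> \<in> B \<and> (Av \<omega>, Sv \<omega>) = c'} = {}"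
        "{\<omega>\<in>space M. Xs \<omega> \<in> B' \<and> (Av \<omega>, Sv \<omega>) = c'} = {}"
        "{\<omega>\<in>space M. X \<omega> \<in> B \<and> Xs \<omega> \<in> B' \<and> (Av \<omega>, Sv \<omega>) = c'} = {}"
        by (auto simp: c')
      show ?thesis unfolding z by simp
    next
      case True
      then obtain \<omega>0 where "Av \<omega>0 = a" "Sv \<omega>0 = c" by blast
      then have a: "a \<in> extensional I" and c: "c \<in> CS" using Av_ext Sv_CS by auto
      define F' where "F' = Phi a -` B' \<inter> space (PiM I (\<lambda>_. borel))"
      have F': "F' \<in> sets (PiM I (\<lambda>_. borel))" unfolding F'_def by (rule measurable_sets[OF Phi_meas B'])
      define e1 where "e1 = {\<omega>\<in>space M. U c \<omega> \<in> F'}"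
      define eC where "eC = {\<omega>\<in>space M. X \<omega> \<in> space (PiM I (\<lambda>_. obs_measure)) \<and> Av \<omega> = a \<and> Sv \<omega> = c}"
      define eB where "eB = {\<omega>\<in>space M. X \<omega> \<in> B \<and> Av \<omega> = a \<and> Sv \<omega> = c}"
      have e1: "e1 \<in> S1" unfolding e1_def by (rule ev1[OF c F'])
      have eC: "eC \<in> S2" unfolding eC_def by (rule ev2[OF sets.top a CS_ext[OF c]])
      have eB: "eB \<in> S2" unfolding eB_def by (rule ev2[OF B a CS_ext[OF c]])
      have XsE: "Xs \<omega> = Phi a (U c \<omega>)" if "Av \<omega> = a" "Sv \<omega> = c" for \<omega> using Xs_eq that by simp
      have s1: "{\<omega>\<in>space M. X \<omega> \<in> B \<and> Xs \<omega> \<in> B' \<and> (Av \<omega>, Sv \<omega>) = c'} = e1 \<inter> eB"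
        unfolding e1_def eB_def F'_def c' using XsE Usp by auto
      have s2: "{\<omega>\<in>space M. (Av \<omega>, Sv \<omega>) = c'} = eC" unfolding eC_def c' using Xsp by auto
      have s3: "{\<omega>\<in>space M. X \<omega> \<in> B \<and> (Av \<omega>, Sv \<omega>) = c'} = eB" unfolding eB_def c' by auto
      have s4: "{\<omega>\<in>space M. Xs \<omega> \<in> B' \<and> (Av \<omega>, Sv \<omega>) = c'} = e1 \<inter> eC"
        unfolding e1_def eC_def F'_def c' using XsE Usp Xsp by auto
      show ?thesis unfolding s1 s2 s3 s4 using indep_setD[OF ind e1 eB] indep_setD[OF ind e1 eC] by simp
    qed
  qed
  define NN where "NN = (PiM I (\<lambda>_. obs_measure) \<Otimes>\<^sub>M PiM I (\<lambda>_. count_space UNIV)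
      :: ((nat \<Rightarrow> real \<times> bool \<times> (real ^ 'k)) \<times> (nat \<Rightarrow> nat)) measure)"
  define K where "K = PiE I (\<lambda>_. UNIV :: bool set) \<times> CS"
  have finK: "finite K" unfolding K_def CS_def using finI by (intro finite_cartesian_product finite_PiE) auto
  have Av_K: "Av \<omega> \<in> PiE I (\<lambda>_. UNIV)" for \<omega> by (simp add: Av_def)
  have CI: "cond_indep_disc M (PiM I (\<lambda>_. borel)) V (PiM I (\<lambda>_. count_space UNIV)) Av Sv"
    using A_cond_indep[of n] unfolding V_def Av_def Sv_def I_def .
  have decomp: "prob {\<omega>\<in>space M. (Y \<omega>, Sv \<omega>) \<in> E}
      = (\<Sum>k\<in>K. prob {\<omega>\<in>space M. (Y \<omega>, Sv \<omega>) \<in> E \<and> Av \<omega> = fst k \<and> Sv \<omega> = snd k})"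
    if Y: "Y \<in> M \<rightarrow>\<^sub>M PiM I (\<lambda>_. obs_measure)" and E: "E \<in> sets NN" for Y E
  proof -
    have "{\<omega>\<in>space M. (Y \<omega>, Sv \<omega>) \<in> E} = (\<Union>k\<in>K. {\<omega>\<in>space M. (Y \<omega>, Sv \<omega>) \<in> E \<and> Av \<omega> = fst k \<and> Sv \<omega> = snd k})"
      using Av_K Sv_CS by (auto simp: K_def)
    moreover have "prob (\<Union>k\<in>K. {\<omega>\<in>space M. (Y \<omega>, Sv \<omega>) \<in> E \<and> Av \<omega> = fst k \<and> Sv \<omega> = snd k})
       = (\<Sum>k\<in>K. prob {\<omega>\<in>space M. (Y \<omega>, Sv \<omega>) \<in> E \<and> Av \<omega> = fst k \<and> Sv \<omega> = snd k})"
    proof (rule measure_finite_Union[OF finK])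
      have "{\<omega>\<in>space M. (Y \<omega>, Sv \<omega>) \<in> E \<and> (Av \<omega>, Sv \<omega>) = k} \<in> events" if k: "k \<in> K" for k
      proof (rule ev_meas[of "\<lambda>\<omega>. (Y \<omega>, Sv \<omega>)" M NN "\<lambda>\<omega>. (Av \<omega>, Sv \<omega>)" "PiM I (\<lambda>_. count_space UNIV) \<Otimes>\<^sub>M PiM I (\<lambda>_. count_space UNIV)"])
        show "(\<lambda>\<omega>. (Y \<omega>, Sv \<omega>)) \<in> M \<rightarrow>\<^sub>M NN" unfolding NN_def using Y by measurable
        show "(\<lambda>\<omega>. (Av \<omega>, Sv \<omega>)) \<in> M \<rightarrow>\<^sub>M PiM I (\<lambda>_. count_space UNIV) \<Otimes>\<^sub>M PiM I (\<lambda>_. count_space UNIV)" by measurable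
        show "E \<in> sets NN" by fact
        have "fst k \<in> extensional I" "snd k \<in> extensional I" using k CS_ext by (auto simp: K_def PiE_def)
        then have "{fst k} \<in> sets (PiM I (\<lambda>_. count_space UNIV))" "{snd k} \<in> sets (PiM I (\<lambda>_. count_space UNIV))"
          by (simp_all add: singleton_PiM_count[OF finI])
        then have "{fst k} \<times> {snd k} \<in> sets (PiM I (\<lambda>_. count_space UNIV) \<Otimes>\<^sub>M PiM I (\<lambda>_. count_space UNIV))"
          by (intro pair_measureI)
        then show "{k} \<in> sets (PiM I (\<lambda>_. count_space UNIV) \<Otimes>\<^sub>M PiM I (\<lambda>_. count_space UNIV))"
          by (cases k) simp
      qed
      moreover have "{\<omega>\<in>space M. (Y \<omega>, Sv \<omega>) \<in> E \<and> (Av \<omega>, Sv \<omega>) = k} = {\<omega>\<in>space M. (Y \<omega>, Sv \<omega>) \<in> E \<and> Av \<omega> = fst k \<and> Sv \<omega> = snd k}" for k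
        by (cases k) auto
      ultimately show "(\<lambda>k. {\<omega>\<in>space M. (Y \<omega>, Sv \<omega>) \<in> E \<and> Av \<omega> = fst k \<and> Sv \<omega> = snd k}) ` K \<subseteq> events" by auto
      show "disjoint_family_on (\<lambda>k. {\<omega>\<in>space M. (Y \<omega>, Sv \<omega>) \<in> E \<and> Av \<omega> = fst k \<and> Sv \<omega> = snd k}) K"
        unfolding disjoint_family_on_def by (auto simp: prod_eq_iff)
      show "emeasure M {\<omega>\<in>space M. (Y \<omega>, Sv \<omega>) \<in> E \<and> Av \<omega> = fst k \<and> Sv \<omega> = snd k} \<noteq> \<infinity>" for k
        by (simp add: emeasure_eq_measure)
    qed
    ultimately show ?thesis by simp
  qed
  have C1: "distr M NN (\<lambda>\<omega>. (Xs \<omega>, Sv \<omega>)) = distr M NN (\<lambda>\<omega>. (X \<omega>, Sv \<omega>))"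
  proof (rule measure_eqI)
    show "sets (distr M NN (\<lambda>\<omega>. (Xs \<omega>, Sv \<omega>))) = sets (distr M NN (\<lambda>\<omega>. (X \<omega>, Sv \<omega>)))" by simp
  next
    fix E assume "E \<in> sets (distr M NN (\<lambda>\<omega>. (Xs \<omega>, Sv \<omega>)))"
    then have E: "E \<in> sets NN" by simp
    have mXs: "(\<lambda>\<omega>. (Xs \<omega>, Sv \<omega>)) \<in> M \<rightarrow>\<^sub>M NN" unfolding NN_def by measurable
    have mX: "(\<lambda>\<omega>. (X \<omega>, Sv \<omega>)) \<in> M \<rightarrow>\<^sub>M NN" unfolding NN_def by measurable
    have trm: "prob {\<omega>\<in>space M. (Xs \<omega>, Sv \<omega>) \<in> E \<and> Av \<omega> = fst k \<and> Sv \<omega> = snd k}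
        = prob {\<omega>\<in>space M. (X \<omega>, Sv \<omega>) \<in> E \<and> Av \<omega> = fst k \<and> Sv \<omega> = snd k}" if k: "k \<in> K" for k
    proof -
      obtain a c where kac: "k = (a, c)" by (cases k)
      have a: "a \<in> extensional I" and c: "c \<in> CS" using k kac by (auto simp: K_def PiE_def)
      have cI: "c \<in> space (PiM I (\<lambda>_. count_space UNIV))" using c by (auto simp: CS_def space_PiM PiE_def)
      define F where "F = (\<lambda>u. (Phi a u, c)) -` E \<inter> space (PiM I (\<lambda>_. borel))"
      have F: "F \<in> sets (PiM I (\<lambda>_. borel))" unfolding F_def
      proof (rule measurable_sets[OF _ E])
        show "(\<lambda>u. (Phi a u, c)) \<in> PiM I (\<lambda>_. borel) \<rightarrow>\<^sub>M NN"
          unfolding NN_def using cI by (intro measurable_Pair Phi_meas measurable_const)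
      qed
      define PTc where "PTc = PiE I (\<lambda>i. str (c i))"
      have PTc: "PTc \<in> sets (PiM I (\<lambda>_. borel))" unfolding PTc_def
        using finI str_sets sQ by (intro sets_PiM_I_finite) auto
      have V_PT: "V \<omega> \<in> PTc \<longleftrightarrow> Sv \<omega> = c" for \<omega>
      proof
        assume "Sv \<omega> = c" then show "V \<omega> \<in> PTc" by (auto simp: Sv_def V_def PTc_def str_def)
      next
        assume "V \<omega> \<in> PTc"
        then have "\<forall>i\<in>I. Sf (Zc (W i \<omega>)) = c i" by (auto simp: V_def PTc_def str_def PiE_iff)
        then show "Sv \<omega> = c" using c unfolding Sv_def CS_def
          by (intro ext) (auto simp: PiE_iff extensional_def)
      qed
      define eC where "eC = {\<omega>\<in>space M. X \<omega> \<in> space (PiM I (\<lambda>_. obs_measure)) \<and> Av \<omega> = a \<and> Sv \<omega> = c}"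
      have eC: "eC \<in> S2" unfolding eC_def by (rule ev2[OF sets.top a CS_ext[OF c]])
      have e1: "{\<omega>\<in>space M. U c \<omega> \<in> F} \<in> S1" by (rule ev1[OF c F])
      have "{\<omega>\<in>space M. (Xs \<omega>, Sv \<omega>) \<in> E \<and> Av \<omega> = a \<and> Sv \<omega> = c} = {\<omega>\<in>space M. U c \<omega> \<in> F} \<inter> eC"
        unfolding F_def eC_def using Xs_eq Usp Xsp by auto
      then have LXs: "prob {\<omega>\<in>space M. (Xs \<omega>, Sv \<omega>) \<in> E \<and> Av \<omega> = a \<and> Sv \<omega> = c}
          = prob {\<omega>\<in>space M. U c \<omega> \<in> F} * prob eC"
        using indep_setD[OF ind e1 eC] by simp
      have sX: "{\<omega>\<in>space M. (X \<omega>, Sv \<omega>) \<in> E \<and> Av \<omega> = a \<and> Sv \<omega> = c}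
          = {\<omega>\<in>space M. V \<omega> \<in> F \<inter> PTc \<and> Av \<omega> \<in> {a} \<and> Sv \<omega> = c}"
        unfolding F_def using X_eq Vsp V_PT by auto
      have sV: "{\<omega>\<in>space M. V \<omega> \<in> F \<inter> PTc \<and> Sv \<omega> = c} = {\<omega>\<in>space M. V \<omega> \<in> F \<inter> PTc}"
        using V_PT by auto
      have sA: "{\<omega>\<in>space M. Av \<omega> \<in> {a} \<and> Sv \<omega> = c} = eC" unfolding eC_def using Xsp by auto
      have ci: "prob {\<omega>\<in>space M. V \<omega> \<in> F \<inter> PTc \<and> Av \<omega> \<in> {a} \<and> Sv \<omega> = c} * prob {\<omega>\<in>space M. Sv \<omega> = c}
          = prob {\<omega>\<in>space M. V \<omega> \<in> F \<inter> PTc \<and> Sv \<omega> = c} * prob {\<omega>\<in>space M. Av \<omega> \<in> {a} \<and> Sv \<omega> = c}"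
        using CI F PTc singleton_PiM_count[OF finI a] unfolding cond_indep_disc_def by blast
      have kk: "prob {\<omega>\<in>space M. V \<omega> \<in> F \<inter> PTc} = prob {\<omega>\<in>space M. U c \<omega> \<in> F} * prob {\<omega>\<in>space M. Sv \<omega> = c}"
          and pos: "0 < prob {\<omega>\<in>space M. Sv \<omega> = c}"
        using key[OF c F] unfolding PTc_def by auto
      have "prob {\<omega>\<in>space M. (X \<omega>, Sv \<omega>) \<in> E \<and> Av \<omega> = a \<and> Sv \<omega> = c} = prob {\<omega>\<in>space M. U c \<omega> \<in> F} * prob eC"
        using ci pos unfolding sX[symmetric] sV kk sA by (simp add: field_simps)
      then show ?thesis using LXs kac by simp
    qed
    have "prob {\<omega>\<in>space M. (Xs \<omega>, Sv \<omega>) \<in> E} = prob {\<omega>\<in>space M. (X \<omega>, Sv \<omega>) \<in> E}"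
      using decomp[OF Xs_meas E] decomp[OF X_meas E] trm by (simp cong: sum.cong)
    moreover have "(\<lambda>\<omega>. (Y \<omega>, Sv \<omega>)) -` E \<inter> space M = {\<omega>\<in>space M. (Y \<omega>, Sv \<omega>) \<in> E}" for Y :: "'o \<Rightarrow> _"
      by auto
    ultimately show "emeasure (distr M NN (\<lambda>\<omega>. (Xs \<omega>, Sv \<omega>))) E = emeasure (distr M NN (\<lambda>\<omega>. (X \<omega>, Sv \<omega>))) E"
      using E mXs mX by (simp add: emeasure_distr emeasure_eq_measure)
  qed
  show ?thesis
    using C1 C2 unfolding NN_def X_def Xs_def Av_def Sv_def I_def by blast
qed

end
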